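(* Fix an integer base $B\ge 2$. For every integer $k>0$ there are infinitely many positive integers $n$ with $h(n)\le -k$.
   Context: For a positive integer $n$, $\delta(n)$ is the number of digits of $n$ in base $B$, i.e. $\delta(n)=k$ iff $B^{k-1}\le n<B^k$. Define $\delta'(1)=0$ and $\delta'(a)=\delta(a)$ for $a>1$. If $n=\prod_{i} p_i^{a_i}$ is the prime power factorisation, set $\phi(n)=\sum_i \big(\delta(p_i)+\delta'(a_i)\big)$ (with $\phi(1)=0$), and $h(n)=\delta(n)-\phi(n)$. *)

theory Defs
  imports "HOL-Computational_Algebra.Primes"
begin

definition ndigits :: "nat \<Rightarrow> nat \<Rightarrow> nat" where
  "ndigits B n = (THE k. B ^ (k - 1) \<le> n \<and> n < B ^ k)"

definition ndigits' :: "nat \<Rightarrow> nat \<Rightarrow> nat" where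
  "ndigits' B a = (if a = 1 then 0 else ndigits B a)"

definition phi_digits :: "nat \<Rightarrow> nat \<Rightarrow> nat" where
  "phi_digits B n = (\<Sum>p\<in>prime_factors n. ndigits B p + ndigits' B (multiplicity p n))"

definition h_digits :: "nat \<Rightarrow> nat \<Rightarrow> int" where
  "h_digits B n = int (ndigits B n) - int (phi_digits B n)"

end

theory Submission imports Defs "HOL-Real_Asymp.Real_Asymp" "HOL-Library.Infinite_Set" begin

lemma mult_as_sum:
  fixes p x :: nat
  assumes p: "prime p" and x: "0 < x" "x < p ^ Suc M"
  shows "multiplicity p x = (\<Sum>k\<in>{1..M}. if p ^ k dvd x then 1 else 0)"
proof -
  have "p ^ multiplicity p x dvd x" by (simp add: multiplicity_dvd)
  hence "p ^ multiplicity p x \<le> x" using x by (simp add: dvd_imp_le)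
  hence "p ^ multiplicity p x < p ^ Suc M" using x by linarith
  hence le: "multiplicity p x \<le> M" using p
    by (metis less_Suc_eq_le power_less_imp_less_exp prime_gt_1_nat)
  have "(\<Sum>k\<in>{1..M}. if p ^ k dvd x then 1 else 0) = card {k\<in>{1..M}. p ^ k dvd x}"
    by (simp add: sum.If_cases) (rule arg_cong[where f=card], auto)
  also have "{k\<in>{1..M}. p ^ k dvd x} = {1..multiplicity p x}"
  proof -
    have pd: "p ^ k dvd x \<longleftrightarrow> k \<le> multiplicity p x" for k
    proof (rule power_dvd_iff_le_multiplicity)
      show "x \<noteq> 0" using x by simp
      show "\<not> is_unit p" using p prime_gt_1_nat[OF p] by simp
    qed
    show ?thesis using le by (auto simp: pd)
  qed
  finally show ?thesis by simp
qed

lemma legendre: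
  fixes p m :: nat
  assumes p: "prime p"
  shows "m < p ^ Suc M \<Longrightarrow> multiplicity p (fact m) = (\<Sum>k\<in>{1..M}. m div p ^ k)"
proof (induction m)
  case 0
  then show ?case by simp
next
  case (Suc m)
  have pos: "0 < p ^ k" for k using p prime_gt_0_nat by simp
  have "multiplicity p (fact (Suc m) :: nat) = multiplicity p (Suc m * fact m)"
    by (simp add: fact_Suc)
  also have "\<dots> = multiplicity p (Suc m) + multiplicity p (fact m :: nat)"
    using p by (intro prime_elem_multiplicity_mult_distrib) auto
  also have "multiplicity p (fact m :: nat) = (\<Sum>k\<in>{1..M}. m div p ^ k)"
    using Suc by simp
  also have "multiplicity p (Suc m) = (\<Sum>k\<in>{1..M}. if p ^ k dvd Suc m then 1 else 0)"
    using Suc.prems p by (intro mult_as_sum) auto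
  also have "(\<Sum>k\<in>{1..M}. if p ^ k dvd Suc m then 1 else 0) + (\<Sum>k\<in>{1..M}. m div p ^ k)
      = (\<Sum>k\<in>{1..M}. Suc m div p ^ k)"
    unfolding sum.distrib[symmetric]
    by (intro sum.cong refl) (auto simp: div_Suc dvd_eq_mod_eq_0)
  finally show ?case .
qed

lemma div2_bounds:
  fixes n q :: nat
  shows "2 * (n div q) \<le> (2 * n) div q" "(2 * n) div q \<le> 2 * (n div q) + 1"
proof -
  show "2 * (n div q) \<le> (2 * n) div q"
  proof (cases "q = 0")
    case False
    have "2 * (n div q) * q \<le> 2 * n" by (simp add: mult.assoc)
    thus ?thesis using False by (simp add: less_eq_div_iff_mult_less_eq)
  qed simp
  show "(2 * n) div q \<le> 2 * (n div q) + 1"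
  proof (cases "q = 0")
    case False
    have "2 * n = 2 * (n div q) * q + 2 * (n mod q)"
      using div_mult_mod_eq[of n q] by linarith
    moreover have "2 * (n mod q) < 2 * q" using False by simp
    ultimately have "2 * n < (2 * (n div q) + 2) * q" by (simp add: algebra_simps)
    hence "(2 * n) div q < 2 * (n div q) + 2" using False
      by (simp add: div_less_iff_less_mult)
    thus ?thesis by simp
  qed simp
qed

lemma mult_central_binom:
  fixes p n :: nat
  assumes p: "prime p" and M: "2 * n < p ^ Suc M"
  shows "multiplicity p ((2 * n) choose n) = (\<Sum>k\<in>{1..M}. (2 * n) div p ^ k - 2 * (n div p ^ k))"
proof -
  have eq: "fact (2 * n) = ((2 * n) choose n) * (fact n * fact n :: nat)"
    using binomial_fact_lemma[of n "2 * n"] by (simp add: mult_ac mult_2)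
  have "multiplicity p (fact (2 * n) :: nat) = multiplicity p ((2 * n) choose n) + multiplicity p (fact n * fact n :: nat)"
    unfolding eq using p by (intro prime_elem_multiplicity_mult_distrib) auto
  also have "multiplicity p (fact n * fact n :: nat) = 2 * multiplicity p (fact n :: nat)"
    using p by (subst prime_elem_multiplicity_mult_distrib) auto
  finally have *: "multiplicity p ((2 * n) choose n) = multiplicity p (fact (2 * n) :: nat) - 2 * multiplicity p (fact n :: nat)"
    by simp
  have "n < p ^ Suc M" using M by simp
  hence "multiplicity p (fact n :: nat) = (\<Sum>k\<in>{1..M}. n div p ^ k)" using legendre[OF p] by simp
  moreover have "multiplicity p (fact (2 * n) :: nat) = (\<Sum>k\<in>{1..M}. (2 * n) div p ^ k)"
    using legendre[OF p] M by simp
  ultimately have "multiplicity p ((2 * n) choose n) = (\<Sum>k\<in>{1..M}. (2 * n) div p ^ k) - (\<Sum>k\<in>{1..M}. 2 * (n div p ^ k))"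
    using * by (simp add: sum_distrib_left)
  also have "\<dots> = (\<Sum>k\<in>{1..M}. (2 * n) div p ^ k - 2 * (n div p ^ k))"
    by (rule sum_subtractf_nat[symmetric]) (use div2_bounds in auto)
  finally show ?thesis .
qed

lemma central_binom_primepow_le:
  fixes p n :: nat
  assumes p: "prime p" and n: "n > 0"
  shows "p ^ multiplicity p ((2 * n) choose n) \<le> 2 * n"
proof (rule ccontr)
  define v where "v = multiplicity p ((2 * n) choose n)"
  assume "\<not> p ^ multiplicity p ((2 * n) choose n) \<le> 2 * n"
  hence big: "2 * n < p ^ v" by (simp add: v_def)
  have p1: "p > 1" using prime_gt_1_nat[OF p] .
  have "2 * n < 2 ^ Suc (2 * n)" by (induction n) auto
  also have "\<dots> \<le> p ^ Suc (2 * n)" using p1 by (intro power_mono) auto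
  finally have M: "2 * n < p ^ Suc (2 * n)" .
  have v: "v = (\<Sum>k\<in>{1..2*n}. (2 * n) div p ^ k - 2 * (n div p ^ k))"
    unfolding v_def by (rule mult_central_binom[OF p M])
  also have "\<dots> \<le> (\<Sum>k\<in>{1..2*n}. if k < v then 1 else 0)"
  proof (intro sum_mono)
    fix k assume k: "k \<in> {1..2*n}"
    show "(2 * n) div p ^ k - 2 * (n div p ^ k) \<le> (if k < v then 1 else 0)"
    proof (cases "k < v")
      case True thus ?thesis using div2_bounds[of n "p ^ k"] by simp
    next
      case False
      hence "p ^ v \<le> p ^ k" using p1 by (intro power_increasing) auto
      hence "2 * n < p ^ k" using big by linarith
      thus ?thesis using False by simp
    qed
  qed
  also have "\<dots> = card {k\<in>{1..2*n}. k < v}"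
    by (simp add: sum.If_cases) (rule arg_cong[where f=card], auto)
  also have "\<dots> \<le> card {1..<v}" by (intro card_mono) auto
  finally have "v \<le> v - 1" by simp
  moreover have "v > 0" using big n by (cases v) auto
  ultimately show False by simp
qed

lemma mult_central_binom_large:
  fixes p n :: nat
  assumes p: "prime p" and "2 * n < p ^ 2"
  shows "multiplicity p ((2 * n) choose n) = (2 * n) div p - 2 * (n div p)"
  using mult_central_binom[OF p, of n 1] assms by (simp add: power2_eq_square)

lemma prod_primes_dvd:
  fixes c :: nat
  assumes "finite S" "\<And>p. p \<in> S \<Longrightarrow> prime p" "\<And>p. p \<in> S \<Longrightarrow> p dvd c"
  shows "\<Prod>S dvd c"
  using assms
proof (induction S rule: finite_induct)
  case empty
  then show ?case by simp
next
  case (insert p S)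
  have "coprime p (\<Prod>S)"
  proof (intro prod_coprime_right)
    fix q assume q: "q \<in> S"
    hence "q \<noteq> p" using insert by auto
    moreover have "prime q" "prime p" using insert q by auto
    ultimately show "coprime p q" using primes_coprime by blast
  qed
  moreover have "\<Prod>S dvd c" using insert by auto
  moreover have "p dvd c" using insert by auto
  ultimately show ?case using insert by (simp add: divides_mult)
qed

lemma binom_odd_le: "(2 * m + 1) choose m \<le> 4 ^ m"
proof -
  have "((2*m+1) choose m) + ((2*m+1) choose (m+1)) = (\<Sum>k\<in>{m, m+1}. (2*m+1) choose k)"
    by simp
  also have "\<dots> \<le> (\<Sum>k\<le>2*m+1. (2*m+1) choose k)"
    by (intro sum_mono2) auto
  also have "\<dots> = 2 ^ (2*m+1)" by (rule choose_row_sum)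
  finally have "2 * ((2*m+1) choose m) \<le> 2 * 4 ^ m"
    using binomial_symmetric[of m "2*m+1"] by (simp add: power_mult power_add)
  thus ?thesis by simp
qed

lemma primorial_le: "\<Prod>{p::nat. prime p \<and> p \<le> x} \<le> 4 ^ x"
proof (induction x rule: less_induct)
  case (less x)
  show ?case
  proof (cases "x \<le> 2")
    case True
    have "{p::nat. prime p \<and> p \<le> x} \<subseteq> {2}"
    proof
      fix p assume "p \<in> {p::nat. prime p \<and> p \<le> x}"
      hence "prime p" "p \<le> x" by auto
      moreover have "p \<ge> 2" using prime_ge_2_nat[OF \<open>prime p\<close>] .
      ultimately show "p \<in> {2}" using True by simp
    qed
    hence "{p::nat. prime p \<and> p \<le> x} = {} \<or> {p::nat. prime p \<and> p \<le> x} = {2}" by blast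
    then show ?thesis
    proof
      assume e: "{p::nat. prime p \<and> p \<le> x} = {}"
      show ?thesis unfolding e by simp
    next
      assume "{p::nat. prime p \<and> p \<le> x} = {2}"
      hence "x \<ge> 2" by auto
      hence "x = 2" using True by simp
      then show ?thesis using \<open>{p::nat. prime p \<and> p \<le> x} = {2}\<close> by simp
    qed
  next
    case False
    show ?thesis
    proof (cases "even x")
      case True
      hence np: "\<not> prime x" using False prime_odd_nat[of x] by (metis not_le)
      have "{p::nat. prime p \<and> p \<le> x} = {p::nat. prime p \<and> p \<le> x - 1}"
      proof (intro set_eqI)
        fix p :: nat
        show "p \<in> {p::nat. prime p \<and> p \<le> x} \<longleftrightarrow> p \<in> {p::nat. prime p \<and> p \<le> x - 1}"
          using np by (cases "p = x") auto
      qed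
      also have "\<Prod>\<dots> \<le> 4 ^ (x - 1)" using less False by simp
      also have "\<dots> \<le> 4 ^ x" by (intro power_increasing) auto
      finally show ?thesis .
    next
      case odd: False
      then obtain m where m: "x = 2 * m + 1" by (metis oddE)
      have m1: "m \<ge> 1" using m False by simp
      have split: "{p::nat. prime p \<and> p \<le> x} = {p. prime p \<and> p \<le> m + 1} \<union> {p. prime p \<and> m + 1 < p \<and> p \<le> x}"
        using m by auto
      have fin1: "finite {p::nat. prime p \<and> p \<le> m + 1}" by simp
      have fin2: "finite {p::nat. prime p \<and> m + 1 < p \<and> p \<le> x}" by simp
      have eqp: "\<Prod>{p::nat. prime p \<and> p \<le> x} = \<Prod>{p::nat. prime p \<and> p \<le> m + 1} * \<Prod>{p. prime p \<and> m + 1 < p \<and> p \<le> x}"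
        unfolding split by (rule prod.union_disjoint) auto
      have b1: "\<Prod>{p::nat. prime p \<and> p \<le> m + 1} \<le> 4 ^ (m + 1)"
        using less.IH[of "m+1"] m m1 by simp
      have "\<Prod>{p::nat. prime p \<and> m + 1 < p \<and> p \<le> x} \<le> (2 * m + 1) choose m"
      proof (rule dvd_imp_le)
        show "\<Prod>{p::nat. prime p \<and> m + 1 < p \<and> p \<le> x} dvd (2 * m + 1) choose m"
        proof (rule prod_primes_dvd[OF fin2])
          fix p assume p: "p \<in> {p::nat. prime p \<and> m + 1 < p \<and> p \<le> x}"
          hence pp: "prime p" by simp
          have eq: "fact (2*m+1) = ((2*m+1) choose m) * (fact m * fact (m+1) :: nat)"
            using binomial_fact_lemma[of m "2*m+1"] by (simp add: mult_ac)
          have "p dvd fact (2*m+1)" using p m pp prime_dvd_fact_iff[OF pp, of "2*m+1"] by simp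
          hence "p dvd ((2*m+1) choose m) * (fact m * fact (m+1) :: nat)" by (simp only: eq)
          moreover have "\<not> p dvd (fact m * fact (m+1) :: nat)"
          proof -
            have "\<not> p dvd (fact m :: nat)" using p prime_dvd_fact_iff[OF pp, of m] by auto
            moreover have "\<not> p dvd (fact (m+1) :: nat)" using p prime_dvd_fact_iff[OF pp, of "m+1"] by auto
            ultimately show ?thesis using prime_dvd_mult_iff[OF pp] by metis
          qed
          ultimately show "p dvd (2*m+1) choose m" using pp by (simp add: prime_dvd_mult_iff)
        qed simp
      qed simp
      also have "\<dots> \<le> 4 ^ m" by (rule binom_odd_le)
      finally have b2: "\<Prod>{p::nat. prime p \<and> m + 1 < p \<and> p \<le> x} \<le> 4 ^ m" .
      have "\<Prod>{p::nat. prime p \<and> p \<le> x} \<le> 4 ^ (m + 1) * 4 ^ m"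
        unfolding eqp by (rule mult_le_mono[OF b1 b2])
      also have "\<dots> = 4 ^ x" using m by (simp add: power_add[symmetric])
      finally show ?thesis .
    qed
  qed
qed

lemma erdos_bound:
  fixes t r :: nat
  assumes t: "t > 0"
    and r: "\<And>p. p * p \<le> 40 * t \<Longrightarrow> p \<le> r"
    and noprime: "\<And>p. prime p \<Longrightarrow> 20 * t < p \<Longrightarrow> p \<le> 39 * t \<Longrightarrow> False"
  shows "((2 * (20 * t)) choose (20 * t)) \<le> (40 * t) ^ r * 4 ^ ((40 * t) div 3) * ((40 * t) choose t)"
proof -
  define n where "n = 20 * t"
  define N where "N = (2 * n) choose n"
  have n0: "n > 0" using t by (simp add: n_def)
  have N0: "N > 0" by (simp add: N_def)
  define PF where "PF = prime_factors N"
  have PFi: "prime p" "p dvd N" if "p \<in> PF" for p using that by (auto simp: PF_def in_prime_factors_iff)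
  have vle: "p ^ multiplicity p N \<le> 2 * n" if "p \<in> PF" for p
    unfolding N_def by (rule central_binom_primepow_le[OF PFi(1)[OF that] n0])
  have vpos: "multiplicity p N > 0" if "p \<in> PF" for p
    using that by (simp add: PF_def prime_factors_multiplicity)
  have big_v: "p ^ multiplicity p N \<le> p" if "p \<in> PF" "2 * n < p * p" for p
  proof -
    have p1: "p > 1" using prime_gt_1_nat PFi(1)[OF that(1)] by blast
    have "p ^ multiplicity p N < p ^ 2" using vle[OF that(1)] that(2) by (simp add: power2_eq_square)
    hence "multiplicity p N < 2" using p1 power_less_imp_less_exp by blast
    hence "multiplicity p N \<le> 1" by simp
    hence "p ^ multiplicity p N \<le> p ^ 1" using p1 by (intro power_increasing) auto
    thus ?thesis by simp
  qed
  define S1 where "S1 = {p\<in>PF. p * p \<le> 2 * n}"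
  define S2 where "S2 = {p\<in>PF. 2 * n < p * p \<and> p \<le> n}"
  define S3 where "S3 = {p\<in>PF. 2 * n < p * p \<and> n < p}"
  have finPF: "finite PF" by (simp add: PF_def)
  have PFsplit: "PF = S1 \<union> (S2 \<union> S3)" by (auto simp: S1_def S2_def S3_def)
  have fin: "finite S1" "finite S2" "finite S3" using finPF by (auto simp: S1_def S2_def S3_def)
  have "N = (\<Prod>p\<in>PF. p ^ multiplicity p N)"
    unfolding PF_def by (rule prime_factorization_nat[OF N0])
  also have "\<dots> = (\<Prod>p\<in>S1. p ^ multiplicity p N) * ((\<Prod>p\<in>S2. p ^ multiplicity p N) * (\<Prod>p\<in>S3. p ^ multiplicity p N))"
  proof -
    have d1: "S1 \<inter> (S2 \<union> S3) = {}" by (auto simp: S1_def S2_def S3_def)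
    have d2: "S2 \<inter> S3 = {}" by (auto simp: S2_def S3_def)
    show ?thesis unfolding PFsplit
      using prod.union_disjoint[OF fin(1) _ d1, of "\<lambda>p. p ^ multiplicity p N"]
        prod.union_disjoint[OF fin(2) fin(3) d2, of "\<lambda>p. p ^ multiplicity p N"] fin by simp
  qed
  finally have Neq: "N = (\<Prod>p\<in>S1. p ^ multiplicity p N) * ((\<Prod>p\<in>S2. p ^ multiplicity p N) * (\<Prod>p\<in>S3. p ^ multiplicity p N))" .
have b1: "(\<Prod>p\<in>S1. p ^ multiplicity p N) \<le> (40 * t) ^ r"
  proof -
    have "(\<Prod>p\<in>S1. p ^ multiplicity p N) \<le> (\<Prod>p\<in>S1. 2 * n)"
      by (intro prod_mono) (auto simp: S1_def vle)
    also have "\<dots> = (2 * n) ^ card S1" by simp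
    also have "card S1 \<le> card {1..r}"
    proof (intro card_mono)
      show "S1 \<subseteq> {1..r}"
      proof
        fix p assume p: "p \<in> S1"
        hence "prime p" using PFi by (auto simp: S1_def)
        hence "p \<ge> 1" using prime_ge_1_nat by blast
        moreover have "p \<le> r" using p r by (auto simp: S1_def n_def)
        ultimately show "p \<in> {1..r}" by simp
      qed
    qed simp
    hence "(2 * n) ^ card S1 \<le> (2 * n) ^ r" using n0 by (intro power_increasing) auto
    finally show ?thesis by (simp add: n_def)
  qed
  have b2: "(\<Prod>p\<in>S2. p ^ multiplicity p N) \<le> 4 ^ ((40 * t) div 3)"
  proof -
    have "(\<Prod>p\<in>S2. p ^ multiplicity p N) \<le> (\<Prod>p\<in>S2. p)"
      by (intro prod_mono) (auto simp: S2_def big_v)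
    also have "\<Prod>S2 dvd \<Prod>{p::nat. prime p \<and> p \<le> (40 * t) div 3}"
    proof (rule prod_dvd_prod_subset)
      show "S2 \<subseteq> {p::nat. prime p \<and> p \<le> (40 * t) div 3}"
      proof
        fix p assume p: "p \<in> S2"
        have pp: "prime p" and pPF: "p \<in> PF" using p PFi by (auto simp: S2_def)
        have "multiplicity p N = (2 * n) div p - 2 * (n div p)"
          unfolding N_def using p by (intro mult_central_binom_large[OF pp]) (auto simp: S2_def power2_eq_square)
        moreover have "multiplicity p N > 0" using vpos[OF pPF] .
        ultimately have ne: "(2 * n) div p \<noteq> 2 * (n div p)" by simp
        have "3 * p \<le> 2 * n"
        proof (rule ccontr)
          assume "\<not> 3 * p \<le> 2 * n"
          hence lt: "2 * n < 3 * p" by simp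
          have pn: "p \<le> n" using p by (simp add: S2_def)
          have p0: "p > 0" using pp prime_gt_0_nat by blast
          have "n div p = 1" using pn lt p0 by (intro div_nat_eqI) auto
          moreover have "(2 * n) div p = 2" using pn lt p0 by (intro div_nat_eqI) auto
          ultimately show False using ne by simp
        qed
        thus "p \<in> {p::nat. prime p \<and> p \<le> (40 * t) div 3}"
          using pp by (auto simp: n_def)
      qed
    qed simp
    hence "\<Prod>S2 \<le> \<Prod>{p::nat. prime p \<and> p \<le> (40 * t) div 3}"
    proof (rule dvd_imp_le)
      show "0 < \<Prod>{p::nat. prime p \<and> p \<le> (40 * t) div 3}"
        by (rule prod_pos) (simp add: prime_gt_0_nat)
    qed
    also have "\<dots> \<le> 4 ^ ((40 * t) div 3)" by (rule primorial_le)
    finally show ?thesis .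
  qed
  have b3: "(\<Prod>p\<in>S3. p ^ multiplicity p N) \<le> (40 * t) choose t"
  proof -
    have "(\<Prod>p\<in>S3. p ^ multiplicity p N) \<le> (\<Prod>p\<in>S3. p)"
      by (intro prod_mono) (auto simp: S3_def big_v)
    also have "\<Prod>S3 \<le> (40 * t) choose t"
    proof (rule dvd_imp_le)
      show "\<Prod>S3 dvd (40 * t) choose t"
      proof (rule prod_primes_dvd[OF fin(3)])
        fix p assume p: "p \<in> S3"
        have pp: "prime p" and pPF: "p \<in> PF" using p PFi by (auto simp: S3_def)
        have "p ^ multiplicity p N \<le> 2 * n" using vle[OF pPF] .
        moreover have "p ^ 1 \<le> p ^ multiplicity p N"
          using vpos[OF pPF] prime_gt_1_nat[OF pp] by (intro power_increasing) auto
        ultimately have ple: "p \<le> 40 * t" by (simp add: n_def)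
        have "20 * t < p" using p by (simp add: S3_def n_def)
        hence gt: "39 * t < p" using noprime[OF pp] by force
        have eq: "fact (40 * t) = ((40 * t) choose t) * (fact t * fact (40 * t - t) :: nat)"
          using binomial_fact_lemma[of t "40 * t"] by (simp add: mult_ac)
        have "p dvd (fact (40 * t) :: nat)" using prime_dvd_fact_iff[OF pp, of "40 * t"] ple by simp
        hence "p dvd ((40 * t) choose t) * (fact t * fact (40 * t - t) :: nat)" by (simp only: eq)
        moreover have "\<not> p dvd (fact t :: nat)" using prime_dvd_fact_iff[OF pp, of t] gt by simp
        moreover have "\<not> p dvd (fact (40 * t - t) :: nat)" using prime_dvd_fact_iff[OF pp, of "40 * t - t"] gt by simp
        ultimately show "p dvd (40 * t) choose t" using prime_dvd_mult_iff[OF pp] by metis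
      next
        fix p assume "p \<in> S3" thus "prime p" using PFi by (auto simp: S3_def)
      qed
    qed simp
    finally show ?thesis .
  qed
  have X: "(\<Prod>p\<in>S1. p ^ multiplicity p N) * ((\<Prod>p\<in>S2. p ^ multiplicity p N) * (\<Prod>p\<in>S3. p ^ multiplicity p N))
     \<le> (40 * t) ^ r * (4 ^ ((40 * t) div 3) * ((40 * t) choose t))"
    by (intro mult_le_mono b1 b2 b3)
  have "N \<le> (40 * t) ^ r * (4 ^ ((40 * t) div 3) * ((40 * t) choose t))"
    by (subst Neq) (rule X)
  thus ?thesis by (simp add: N_def n_def mult.assoc)
qed

lemma pow_over_fact_le_exp: "(real t) ^ t / fact t \<le> exp (real t)"
proof -
  have s: "(\<lambda>n. real t ^ n / fact n) sums exp (real t)"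
    using exp_converges[of "real t"] by (simp add: field_simps)
  have "(\<Sum>n\<in>{t}. real t ^ n / fact n) \<le> suminf (\<lambda>n. real t ^ n / fact n)"
    by (rule sum_le_suminf) (use s in \<open>auto simp: sums_iff\<close>)
  thus ?thesis using s by (simp add: sums_iff)
qed

lemma binom_40_bound: "real ((40 * t) choose t) \<le> 120 ^ t"
proof (cases "t = 0")
  case False
  have "real ((40 * t) choose t) * fact t \<le> real (40 * t) ^ t"
    using binomial_fact_pow[of "40 * t" t] by (metis of_nat_fact of_nat_le_iff of_nat_mult of_nat_power)
  hence "real ((40 * t) choose t) \<le> real (40 * t) ^ t / fact t"
    by (simp add: field_simps)
  also have "\<dots> = 40 ^ t * (real t ^ t / fact t)" by (simp add: power_mult_distrib)
  also have "\<dots> \<le> 40 ^ t * exp (real t)"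
    by (intro mult_left_mono pow_over_fact_le_exp) auto
  also have "exp (real t) = exp 1 ^ t" by (subst exp_of_nat_mult[symmetric]) simp
  also have "\<dots> \<le> 3 ^ t" by (intro power_mono exp_le) auto
  finally show ?thesis by (simp add: power_mult_distrib[symmetric])
qed simp

lemma ev_growth: "eventually (\<lambda>x::real. 40*x * (40*x) powr sqrt(40*x) < 2 powr x) at_top"
  by real_asymp

lemma short_prime: "\<exists>T::nat. \<forall>t\<ge>T. \<exists>p::nat. prime p \<and> 20 * t < p \<and> p \<le> 39 * t"
proof -
  obtain X where X: "\<And>x. x \<ge> X \<Longrightarrow> 40*x * (40*x) powr sqrt(40*x) < 2 powr x"
    using ev_growth unfolding eventually_at_top_linorder by blast
  define T where "T = nat \<lceil>X\<rceil> + 1"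
  show ?thesis
  proof (rule exI[of _ T], intro allI impI)
    fix t :: nat assume tT: "T \<le> t"
    hence t0: "t > 0" by (simp add: T_def)
    have tX: "real t \<ge> X" using tT unfolding T_def by linarith
    show "\<exists>p. prime p \<and> 20 * t < p \<and> p \<le> 39 * t"
    proof (rule ccontr)
      assume np: "\<not> (\<exists>p. prime p \<and> 20 * t < p \<and> p \<le> 39 * t)"
      define r where "r = nat \<lfloor>sqrt (real (40 * t))\<rfloor>"
      have rp: "p \<le> r" if "p * p \<le> 40 * t" for p
      proof -
        have "real p ^ 2 \<le> real (40 * t)" using that
          by (metis of_nat_le_iff of_nat_mult power2_eq_square)
        hence "real p \<le> sqrt (real (40 * t))" by (rule real_le_rsqrt)
        thus ?thesis unfolding r_def by linarith
      qed
      have rs: "real r \<le> sqrt (real (40 * t))" unfolding r_def by simp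
      have E: "((2 * (20 * t)) choose (20 * t)) \<le> (40 * t) ^ r * 4 ^ ((40 * t) div 3) * ((40 * t) choose t)"
        using erdos_bound[OF t0 rp] np by blast
      define d where "d = (40 * t) div 3"
      have dle: "d + 6 * t \<le> 20 * t" unfolding d_def by linarith
      have "4 ^ (20 * t) / (2 * real (20 * t)) \<le> real ((2 * (20 * t)) choose (20 * t))"
        using central_binomial_lower_bound[of "20 * t"] t0 by simp
      also have "\<dots> \<le> real ((40 * t) ^ r * 4 ^ d * ((40 * t) choose t))"
        using E unfolding d_def by (simp only: of_nat_le_iff)
      also have "\<dots> = real (40 * t) ^ r * 4 ^ d * real ((40 * t) choose t)" by simp
      also have "\<dots> \<le> real (40 * t) ^ r * 4 ^ d * 120 ^ t"
        by (intro mult_left_mono binom_40_bound) auto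
      finally have "4 ^ (20 * t) \<le> 2 * real (20 * t) * (real (40 * t) ^ r * 4 ^ d * 120 ^ t)"
        using t0 by (simp add: field_simps)
      moreover have "(4::real) ^ (20 * t) \<ge> 4 ^ d * 4 ^ (6 * t)"
        using dle by (simp add: power_add[symmetric] power_increasing)
      ultimately have "4 ^ d * 4 ^ (6 * t) \<le> 4 ^ d * (real (40 * t) * real (40 * t) ^ r * 120 ^ t)"
      proof -
        have eq: "2 * real (20 * t) * (real (40 * t) ^ r * 4 ^ d * 120 ^ t) = 4 ^ d * (real (40 * t) * real (40 * t) ^ r * 120 ^ t)"
          by (simp add: algebra_simps)
        show ?thesis using \<open>4 ^ (20 * t) \<le> 2 * real (20 * t) * (real (40 * t) ^ r * 4 ^ d * 120 ^ t)\<close>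
          \<open>(4::real) ^ (20 * t) \<ge> 4 ^ d * 4 ^ (6 * t)\<close> unfolding eq by linarith
      qed
      hence "(4::real) ^ (6 * t) \<le> real (40 * t) * real (40 * t) ^ r * 120 ^ t"
        by simp
      moreover have "(4::real) ^ (6 * t) = 4096 ^ t" by (simp add: power_mult)
      moreover have "(2::real) ^ t * 120 ^ t \<le> 4096 ^ t"
        by (simp add: power_mult_distrib[symmetric] power_mono)
      ultimately have "2 ^ t * 120 ^ t \<le> (real (40 * t) * real (40 * t) ^ r) * 120 ^ t" by linarith
      hence A: "(2::real) ^ t \<le> real (40 * t) * real (40 * t) ^ r" by simp
      have "real (40 * t) ^ r = real (40 * t) powr real r"
        using t0 by (simp add: powr_realpow)
      also have "\<dots> \<le> real (40 * t) powr sqrt (real (40 * t))"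
        using t0 rs by (intro powr_mono) auto
      finally have B: "real (40 * t) ^ r \<le> real (40 * t) powr sqrt (real (40 * t))" .
      have "40 * real t * (40 * real t) powr sqrt (40 * real t) < 2 powr real t" using X[OF tX] .
      also have "\<dots> = 2 ^ t" by (simp add: powr_realpow)
      finally have "real (40 * t) * real (40 * t) powr sqrt (real (40 * t)) < 2 ^ t" by simp
      moreover have "real (40 * t) * real (40 * t) ^ r \<le> real (40 * t) * real (40 * t) powr sqrt (real (40 * t))"
        using B by (intro mult_left_mono) auto
      ultimately show False using A by linarith
    qed
  qed
qed

lemma ndigits_eq:
  fixes B n k :: nat
  assumes B: "B \<ge> 2" and k: "B ^ (k - 1) \<le> n" "n < B ^ k"
  shows "ndigits B n = k"
  unfolding ndigits_def
proof (rule the_equality)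
  show "B ^ (k - 1) \<le> n \<and> n < B ^ k" using k by simp
next
  fix k' assume k': "B ^ (k' - 1) \<le> n \<and> n < B ^ k'"
  show "k' = k"
  proof (rule ccontr)
    assume "k' \<noteq> k"
    hence "k' < k \<or> k < k'" by auto
    thus False
    proof
      assume "k' < k"
      hence "B ^ k' \<le> B ^ (k - 1)" using B by (intro power_increasing) auto
      thus False using k k' by linarith
    next
      assume "k < k'"
      hence "B ^ k \<le> B ^ (k' - 1)" using B by (intro power_increasing) auto
      thus False using k k' by linarith
    qed
  qed
qed

lemma ndigits_le:
  fixes B n K :: nat
  assumes B: "B \<ge> 2" and n: "0 < n" "n < B ^ K"
  shows "ndigits B n \<le> K"
proof -
  define k0 where "k0 = (LEAST k. n < B ^ k)"
  have k0K: "k0 \<le> K" unfolding k0_def using n by (intro Least_le) simp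
  have k0n: "n < B ^ k0" unfolding k0_def using n by (intro LeastI) simp
  have k0pos: "k0 > 0" using k0n n by (cases k0) auto
  have "\<not> n < B ^ (k0 - 1)" unfolding k0_def
    by (rule not_less_Least) (use k0pos in \<open>simp add: k0_def\<close>)
  hence "B ^ (k0 - 1) \<le> n" by simp
  hence "ndigits B n = k0" using ndigits_eq[OF B _ k0n] by simp
  thus ?thesis using k0K by simp
qed

lemma prime_near_power:
  fixes B :: nat
  assumes B: "B \<ge> 2"
  shows "\<exists>D. \<forall>j\<ge>D. \<exists>p. prime p \<and> B ^ j < p \<and> 25 * p \<le> 49 * B ^ j"
proof -
  obtain T where T: "\<And>t. t \<ge> T \<Longrightarrow> \<exists>p::nat. prime p \<and> 20 * t < p \<and> p \<le> 39 * t"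
    using short_prime by blast
  define D where "D = 20 * T + 3900"
  show ?thesis
  proof (rule exI[of _ D], intro allI impI)
    fix j assume j: "D \<le> j"
    define x where "x = B ^ j"
    have "j < 2 ^ j" by (rule less_exp)
    also have "\<dots> \<le> B ^ j" using B by (intro power_mono) auto
    finally have xj: "j < x" by (simp add: x_def)
    define t where "t = x div 20 + 1"
    have dm: "20 * (x div 20) + x mod 20 = x" "x mod 20 < 20" by simp_all
    have te: "20 * t = 20 * (x div 20) + 20" unfolding t_def by simp
    have t1: "x < 20 * t" using te dm by linarith
    have t2: "20 * t \<le> x + 20" using te dm by linarith
    have tT: "t \<ge> T" using xj j t1 unfolding D_def by linarith
    obtain p where p: "prime p" "20 * t < p" "p \<le> 39 * t" using T[OF tT] by blast
    have "x < p" using t1 p by linarith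
    moreover have "25 * p \<le> 49 * x" using p t2 xj j unfolding D_def by linarith
    ultimately show "\<exists>p. prime p \<and> B ^ j < p \<and> 25 * p \<le> 49 * B ^ j"
      using p unfolding x_def by blast
  qed
qed

lemma exists_m:
  fixes B K :: nat
  shows "\<exists>m. m \<ge> K \<and> m \<ge> 1 \<and> 49 ^ m * B ^ K < 50 ^ m"
proof -
  define m where "m = 49 * B ^ K + 49 * K + 49"
  have "1 + real m * (1/49) \<le> (1 + 1/49) ^ m"
    by (rule Bernoulli_inequality) simp
  hence "49 ^ m * (1 + real m / 49) \<le> 49 ^ m * (50/49) ^ m" by simp
  also have "\<dots> = 50 ^ m" by (simp add: power_divide)
  finally have A: "49 ^ m * (1 + real m / 49) \<le> 50 ^ m" .
  have "real (B ^ K) < 1 + real m / 49" unfolding m_def by (simp add: add_divide_distrib)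
  hence "49 ^ m * real (B ^ K) < 49 ^ m * (1 + real m / 49)" by simp
  hence "49 ^ m * real (B ^ K) < 50 ^ m" using A by linarith
  hence "real (49 ^ m * B ^ K) < real (50 ^ m)" by simp
  hence "49 ^ m * B ^ K < 50 ^ m" by (simp only: of_nat_less_iff)
  moreover have "m \<ge> K" "m \<ge> 1" unfolding m_def by auto
  ultimately show ?thesis by blast
qed

theorem proposition5:
  fixes B :: nat and k :: int
  assumes "B \<ge> 2" and "k > 0"
  shows "infinite {n::nat. n > 0 \<and> h_digits B n \<le> - k}"
proof -
  have B: "B \<ge> 2" using assms(1) .
  define K where "K = nat k"
  obtain m where m: "m \<ge> K" "m \<ge> 1" "49 ^ m * B ^ K < 50 ^ m" using exists_m by blast
  obtain D0 where D0: "\<And>j. j \<ge> D0 \<Longrightarrow> \<exists>p. prime p \<and> B ^ j < p \<and> 25 * p \<le> 49 * B ^ j"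
    using prime_near_power[OF B] by blast
  define P where "P j = (SOME p. prime p \<and> B ^ j < p \<and> 25 * p \<le> 49 * B ^ j)" for j
  have P: "prime (P j) \<and> B ^ j < P j \<and> 25 * P j \<le> 49 * B ^ j" if "j \<ge> D0" for j
    unfolding P_def by (rule someI_ex[OF D0[OF that]])
  have Pdig: "ndigits B (P j) = j + 1" if "j \<ge> D0" for j
  proof (rule ndigits_eq[OF B])
    show "B ^ (j + 1 - 1) \<le> P j" using P[OF that] by simp
    have "25 * P j < 50 * B ^ j" using P[OF that] B by (simp add: less_le_trans)
    also have "\<dots> \<le> 25 * (B * B ^ j)" using B by simp
    finally show "P j < B ^ (j + 1)" by simp
  qed
  show ?thesis unfolding infinite_nat_iff_unbounded_le
  proof
    fix N :: nat
    define D where "D = max D0 (N + 1)"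
    define J where "J = {D..<D + m}"
    define n where "n = (\<Prod>j\<in>J. P j)"
    have JD: "j \<ge> D0" if "j \<in> J" for j using that by (auto simp: J_def D_def)
    have finJ: "finite J" and cardJ: "card J = m" by (simp_all add: J_def)
    have inj: "inj_on P J"
    proof
      fix i j assume "i \<in> J" "j \<in> J" "P i = P j"
      hence "ndigits B (P i) = ndigits B (P j)" by simp
      thus "i = j" using Pdig[OF JD[OF \<open>i \<in> J\<close>]] Pdig[OF JD[OF \<open>j \<in> J\<close>]] by simp
    qed
    define S where "S = P ` J"
    have finS: "finite S" using finJ by (simp add: S_def)
    have Sprime: "\<And>p. p \<in> S \<Longrightarrow> prime p" using P JD by (auto simp: S_def)
    have nS: "n = (\<Prod>p\<in>S. p ^ (\<lambda>_. 1::nat) p)"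
      unfolding n_def S_def using prod.reindex[OF inj, of "\<lambda>p. p"] by simp
    have npos: "n > 0" unfolding n_def using P JD by (intro prod_pos) (auto intro: prime_gt_0_nat)
    have mult: "multiplicity p n = (if p \<in> S then 1 else 0)" if "prime p" for p
      unfolding nS by (rule multiplicity_prod_prime_powers[OF finS Sprime that])
    have pf: "prime_factors n = S"
      unfolding prime_factors_multiplicity using mult Sprime by (auto split: if_splits)
    have "phi_digits B n = (\<Sum>p\<in>S. ndigits B p + ndigits' B (multiplicity p n))"
      unfolding phi_digits_def pf ..
    also have "\<dots> = (\<Sum>p\<in>S. ndigits B p)"
      by (intro sum.cong refl) (simp add: mult Sprime ndigits'_def)
    also have "\<dots> = (\<Sum>j\<in>J. ndigits B (P j))"
      unfolding S_def by (rule sum.reindex[OF inj, unfolded comp_def])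
    also have "\<dots> = (\<Sum>j\<in>J. j + 1)" by (intro sum.cong refl) (simp add: Pdig JD)
    also have "\<dots> = (\<Sum>j\<in>J. j) + m" using sum.distrib[of "\<lambda>j. j" "\<lambda>j. 1" J] cardJ by simp
    finally have phi: "phi_digits B n = (\<Sum>j\<in>J. j) + m" .
    define \<Sigma> where "\<Sigma> = (\<Sum>j\<in>J. j)"
    have "25 ^ m * n = (\<Prod>j\<in>J. 25 * P j)"
      unfolding n_def by (simp add: prod.distrib cardJ)
    also have "\<dots> \<le> (\<Prod>j\<in>J. 49 * B ^ j)"
      by (intro prod_mono) (use P JD in auto)
    also have "\<dots> = 49 ^ m * B ^ \<Sigma>"
      by (simp add: prod.distrib cardJ \<Sigma>_def power_sum)
    finally have bound: "25 ^ m * n \<le> 49 ^ m * B ^ \<Sigma>" .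
    have "25 ^ m * (n * B ^ K) \<le> (49 ^ m * B ^ K) * B ^ \<Sigma>"
      using bound by (simp add: algebra_simps)
    also have "\<dots> < 50 ^ m * B ^ \<Sigma>"
      using m(3) B by (intro mult_strict_right_mono) auto
    also have "\<dots> \<le> (25 ^ m * B ^ m) * B ^ \<Sigma>"
    proof -
      have "(50::nat) ^ m = 25 ^ m * 2 ^ m" by (simp add: power_mult_distrib[symmetric])
      also have "\<dots> \<le> 25 ^ m * B ^ m" using B by (intro mult_left_mono power_mono) auto
      finally show ?thesis by simp
    qed
    finally have "n * B ^ K < B ^ m * B ^ \<Sigma>" by (simp add: algebra_simps)
    also have "B ^ m * B ^ \<Sigma> = B ^ K * B ^ (\<Sigma> + m - K)"
      using m(1) by (simp add: power_add[symmetric] add.commute)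
    finally have "B ^ K * n < B ^ K * B ^ (\<Sigma> + m - K)" by (simp add: mult.commute)
    hence nlt: "n < B ^ (\<Sigma> + m - K)" by simp
    have dig: "ndigits B n \<le> \<Sigma> + m - K" by (rule ndigits_le[OF B npos nlt])
    have hle: "h_digits B n \<le> - k"
      unfolding h_digits_def phi \<Sigma>_def[symmetric] using dig m(1) assms(2) unfolding K_def by linarith
    have DJ: "D \<in> J" using m(2) by (simp add: J_def)
    have "P D dvd n" unfolding n_def by (rule dvd_prodI[OF finJ DJ])
    hence "P D \<le> n" using npos by (rule dvd_imp_le)
    moreover have "B ^ D < P D" using P[OF JD[OF DJ]] by simp
    moreover have "D < 2 ^ D" by (rule less_exp)
    moreover have "(2::nat) ^ D \<le> B ^ D" using B by (intro power_mono) auto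
    ultimately have "N \<le> n" unfolding D_def by linarith
    thus "\<exists>n'\<ge>N. n' \<in> {n::nat. n > 0 \<and> h_digits B n \<le> - k}" using npos hle by blast
  qed
qed

end
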